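(* Let $p\ge1$, $k\ge1$, $r\in\{1,\dots,p-1\}$, $q=p-r$. Let $c\in\mathbb R^p$ and $\Phi_0,\dots,\Phi_k\in\mathbb R^{p\times p}$, with $\Phi(\lambda)=\Phi_0-\sum_{i=1}^k\Phi_i\lambda^i$, satisfy: $\Phi_0$ is invertible; $c\in\operatorname{span}\Phi(1)$ and $\operatorname{rank}\Phi(1)=r$; and $\Phi(\lambda)$ has $q$ roots at unity and all others outside the unit circle. Let $\alpha,\beta\in\mathbb R^{p\times r}$ have full column rank with $\alpha\beta^\top=-\Phi(1)$, let $\Gamma_j=-\sum_{i=j+1}^k\Phi_i$, $H=\Phi_0-\sum_{i=1}^{k-1}\Gamma_i$, and $\chi(z)=\begin{bmatrix}\alpha_\perp^\top H\\\beta^\top\end{bmatrix}z$. Then $\chi$ is invertible and for $y=(y_{(1)}^\top,y_{(2)}^\top)^\top\in\mathbb R^q\times\mathbb R^r$, $$\chi^{-1}(y)=\beta_\perp(\alpha_\perp^\top H\beta_\perp)^{-1}y_{(1)}+\{I-\beta_\perp(\alpha_\perp^\top H\beta_\perp)^{-1}\alpha_\perp^\top H\}\beta(\beta^\top\beta)^{-1}y_{(2)}.$$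
   Context: Roots of $\Phi(\lambda)$ are roots of $\det\Phi(\lambda)$. For a $p\times r$ matrix $a$ of rank $r$, $a_\perp$ denotes a $p\times(p-r)$ matrix of rank $p-r$ with $a_\perp^\top a=0$. *)

theory Defs
  imports "HOL-Analysis.Analysis" "HOL-Computational_Algebra.Polynomial"
begin

definition Phi_poly :: "nat \<Rightarrow> (nat \<Rightarrow> real^'p^'p) \<Rightarrow> real poly^'p^'p" where
  "Phi_poly k Phi = (\<chi> a b. [:Phi 0 $ a $ b:] - (\<Sum>i=1..k. monom (Phi i $ a $ b) i))"

definition det_Phi :: "nat \<Rightarrow> (nat \<Rightarrow> real^'p^'p) \<Rightarrow> real poly" where
  "det_Phi k Phi = det (Phi_poly k Phi)"

definition Phi_one :: "nat \<Rightarrow> (nat \<Rightarrow> real^'p^'p) \<Rightarrow> real^'p^'p" where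
  "Phi_one k Phi = Phi 0 - (\<Sum>i=1..k. Phi i)"

definition Gamma :: "nat \<Rightarrow> (nat \<Rightarrow> real^'p^'p) \<Rightarrow> nat \<Rightarrow> real^'p^'p" where
  "Gamma k Phi j = - (\<Sum>i=j+1..k. Phi i)"

definition Hmat :: "nat \<Rightarrow> (nat \<Rightarrow> real^'p^'p) \<Rightarrow> real^'p^'p" where
  "Hmat k Phi = Phi 0 - (\<Sum>i=1..k-1. Gamma k Phi i)"

end

theory Submission
  imports Defs
begin

lemma minv: "invertible A \<Longrightarrow> A ** matrix_inv A = mat 1 \<and> matrix_inv A ** A = mat 1"
  unfolding matrix_inv_def invertible_def by (rule someI_ex)

lemma sum_bij_Plus:
  fixes h :: "'a::finite + 'b::finite \<Rightarrow> 'c::finite" and f :: "'c \<Rightarrow> 'd::comm_monoid_add"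
  assumes "bij h"
  shows "(\<Sum>j\<in>UNIV. f j) = (\<Sum>i\<in>UNIV. f (h (Inl i))) + (\<Sum>i\<in>UNIV. f (h (Inr i)))"
proof -
  have "(\<Sum>j\<in>UNIV. f j) = (\<Sum>s\<in>UNIV. f (h s))"
    using assms by (metis bij_def sum.reindex comp_apply sum.cong)
  also have "\<dots> = (\<Sum>s\<in>UNIV <+> UNIV. f (h s))" by simp
  also have "\<dots> = (\<Sum>i\<in>UNIV. f (h (Inl i))) + (\<Sum>i\<in>UNIV. f (h (Inr i)))"
    by (subst sum.Plus) (auto simp: comp_def)
  finally show ?thesis .
qed

lemma prod_bij_Plus:
  fixes h :: "'a::finite + 'b::finite \<Rightarrow> 'c::finite" and f :: "'c \<Rightarrow> 'd::comm_monoid_mult"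
  assumes "bij h"
  shows "(\<Prod>j\<in>UNIV. f j) = (\<Prod>i\<in>UNIV. f (h (Inl i))) * (\<Prod>i\<in>UNIV. f (h (Inr i)))"
proof -
  have "(\<Prod>j\<in>UNIV. f j) = (\<Prod>s\<in>UNIV. f (h s))"
    using assms by (metis bij_def prod.reindex comp_apply prod.cong)
  also have "\<dots> = (\<Prod>s\<in>UNIV <+> UNIV. f (h s))" by simp
  also have "\<dots> = (\<Prod>i\<in>UNIV. f (h (Inl i))) * (\<Prod>i\<in>UNIV. f (h (Inr i)))"
    by (subst prod.Plus) (auto simp: comp_def)
  finally show ?thesis .
qed

lemma taylor2:
  fixes f :: "real poly"
  shows "\<exists>r. f = [:poly f 1:] + [:-1,1:] * [:poly (pderiv f) 1:] + [:-1,1:]^2 * r"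
proof -
  define g where "g = synthetic_div f 1"
  define h where "h = synthetic_div g 1"
  have f: "f = [:-1,1:] * g + [:poly f 1:]" using synthetic_div_correct'[of 1 f] by (simp add: g_def)
  have g: "g = [:-1,1:] * h + [:poly g 1:]" using synthetic_div_correct'[of 1 g] by (simp add: h_def)
  have "pderiv f = pderiv ([:-1,1:] * g)" by (subst f) (simp add: pderiv_add)
  also have "\<dots> = [:-1,1:] * pderiv g + g"
  proof -
    have d: "pderiv [:-1::real,1:] = 1" by (simp add: pderiv_pCons)
    show ?thesis by (simp only: pderiv_mult d mult_1_right)
  qed
  finally have "poly (pderiv f) 1 = poly g 1" by simp
  moreover have "f = [:poly f 1:] + [:-1,1:] * [:poly g 1:] + [:-1,1:]^2 * h"
  proof -
    define E where "E = [:-1::real,1:]"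
    have f': "f = E * g + [:poly f 1:]" and g': "g = E * h + [:poly g 1:]"
      using f g by (simp_all add: E_def)
    have "f = E * (E * h + [:poly g 1:]) + [:poly f 1:]" using f' g' by simp
    then have "f = [:poly f 1:] + E * [:poly g 1:] + E^2 * h"
      by (simp add: algebra_simps power2_eq_square)
    then show ?thesis by (simp add: E_def)
  qed
  ultimately have "f = [:poly f 1:] + [:-1,1:] * [:poly (pderiv f) 1:] + [:-1,1:]^2 * h"
    by simp
  then show ?thesis by blast
qed

lemma sum_shift:
  fixes f :: "nat \<Rightarrow> real"
  shows "(\<Sum>i=1..k-1. \<Sum>j=i+1..k. f j) = (\<Sum>j=1..k. (real j - 1) * f j)"
proof (induction k)
  case 0 then show ?case by simp
next
  case (Suc k)
  have "(\<Sum>i=1..Suc k-1. \<Sum>j=i+1..Suc k. f j) = (\<Sum>i=1..k. (\<Sum>j=i+1..k. f j) + f (Suc k))"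
    by (intro sum.cong) auto
  also have "\<dots> = (\<Sum>i=1..k. \<Sum>j=i+1..k. f j) + real k * f (Suc k)"
    by (simp add: sum.distrib)
  also have "(\<Sum>i=1..k. \<Sum>j=i+1..k. f j) = (\<Sum>i=1..k-1. \<Sum>j=i+1..k. f j)"
  proof (cases k)
    case 0 then show ?thesis by simp
  next
    case (Suc m) then show ?thesis by simp
  qed
  finally show ?case using Suc by simp
qed

lemma pderiv_sum': "pderiv (sum f A) = (\<Sum>x\<in>A. pderiv (f x))"
  by (induction A rule: infinite_finite_induct) (simp_all add: pderiv_add)

lemma Phi_poly_at1: "poly (Phi_poly k Phi $ a $ b) 1 = Phi_one k Phi $ a $ b"
  unfolding Phi_poly_def Phi_one_def by (simp add: poly_sum poly_monom)

lemma Phi_poly_at0: "poly (Phi_poly k Phi $ a $ b) 0 = Phi 0 $ a $ b"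
  unfolding Phi_poly_def by (simp add: poly_sum poly_monom)

lemma Phi_poly_deriv1: "poly (pderiv (Phi_poly k Phi $ a $ b)) 1 = (Phi_one k Phi - Hmat k Phi) $ a $ b"
proof -
  have "poly (pderiv (Phi_poly k Phi $ a $ b)) 1 = - (\<Sum>i=1..k. real i * Phi i $ a $ b)"
    unfolding Phi_poly_def by (simp add: pderiv_diff pderiv_sum' pderiv_monom poly_sum poly_monom)
  also have "\<dots> = - (\<Sum>i=1..k. Phi i $ a $ b) - (\<Sum>i=1..k. (real i - 1) * Phi i $ a $ b)"
    by (simp add: sum.distrib[symmetric] algebra_simps sum_negf[symmetric])
  also have "\<dots> = (Phi_one k Phi - Hmat k Phi) $ a $ b"
    unfolding Phi_one_def Hmat_def Gamma_def using sum_shift[of "\<lambda>j. Phi j $ a $ b" k]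
    by (simp add: sum_negf)
  finally show ?thesis .
qed

lemma Phi_decomp:
  "\<exists>R. \<forall>a b. Phi_poly k Phi $ a $ b = [:Phi_one k Phi $ a $ b:]
      + [:-1,1:] * [:(Phi_one k Phi - Hmat k Phi) $ a $ b:] + [:-1,1:]^2 * R a b"
proof -
  have "\<forall>a b. \<exists>r. Phi_poly k Phi $ a $ b = [:Phi_one k Phi $ a $ b:]
      + [:-1,1:] * [:(Phi_one k Phi - Hmat k Phi) $ a $ b:] + [:-1,1:]^2 * r"
    using taylor2 Phi_poly_at1 Phi_poly_deriv1 by metis
  then show ?thesis by metis
qed

lemma transpose_zero': "transpose (0::'a::zero^'n^'m) = 0"
  by (simp add: transpose_def vec_eq_iff)

lemma poly_det: "poly (det (A :: real poly^'n^'n)) x = det (\<chi> i j. poly (A$i$j) x)"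
  unfolding det_def by (simp add: poly_sum poly_prod)

lemma gram_zero:
  fixes X :: "real^'m^'n"
  assumes "(transpose X ** X) *v b = 0"
  shows "X *v b = 0"
proof -
  have "(X *v b) \<bullet> (X *v b) = b \<bullet> ((transpose X ** X) *v b)"
    by (metis dot_lmul_matrix matrix_vector_mul_assoc vector_transpose_matrix)
  then show ?thesis using assms by simp
qed

lemma orth_decomp:
  fixes X :: "real^'m^'n" and Y :: "real^'k^'n"
  assumes "transpose Y ** X = 0" "rank X + rank Y = CARD('n)"
  shows "\<exists>a b. z = X *v a + Y *v b"
proof -
  let ?A = "range ((*v) X)" and ?B = "range ((*v) Y)"
  have orth: "x \<bullet> y = 0" if xy: "x \<in> ?A" "y \<in> ?B" for x y
  proof -
    obtain a b where "x = X *v a" "y = Y *v b" using xy by auto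
    then have "y \<bullet> x = b \<bullet> ((transpose Y ** X) *v a)"
      by (metis dot_lmul_matrix matrix_vector_mul_assoc vector_transpose_matrix)
    then show ?thesis using assms(1) by (simp add: inner_commute)
  qed
  have "dim (?A \<union> ?B) = dim ?A + dim ?B" using orth by (intro dim_orthogonal_sum) blast
  also have "\<dots> = CARD('n)" using assms(2) by (simp add: rank_dim_range)
  finally have "span (?A \<union> ?B) = UNIV"
    using dim_eq_full[of "?A \<union> ?B"] by simp
  then have "z \<in> span (?A \<union> ?B)" by simp
  then obtain x y where "x \<in> span ?A" "y \<in> span ?B" "z = x + y"
    by (auto simp: span_Un)
  moreover have "span ?A = ?A" "span ?B = ?B"
    using span_eq_iff subspace_UNIV linear_subspace_image matrix_vector_mul_linear by blast+
  ultimately show ?thesis by auto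
qed

lemma mneg_r: "(A::'a::ring_1^'n^'m) ** (- B) = - (A ** B)"
  by (simp add: matrix_matrix_mult_def vec_eq_iff sum_negf)
lemma mneg_l: "(- A::'a::ring_1^'n^'m) ** B = - (A ** B)"
  by (simp add: matrix_matrix_mult_def vec_eq_iff sum_negf)
lemma mdiff_l: "(A::'a::ring_1^'n^'m) ** (B - C) = A ** B - A ** C"
  by (simp add: matrix_matrix_mult_def vec_eq_iff sum_subtractf algebra_simps)
lemma mdiff_r: "(A - B::'a::ring_1^'n^'m) ** C = A ** C - B ** C"
  by (simp add: matrix_matrix_mult_def vec_eq_iff sum_subtractf algebra_simps)
lemma mvneg: "(- A::'a::ring_1^'n^'m) *v x = - (A *v x)"
  by (simp add: matrix_vector_mult_def vec_eq_iff sum_negf)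

lemma smult_sum_left': "smult (\<Sum>x\<in>A. f x) p = (\<Sum>x\<in>A. smult (f x) p)"
  by (induction A rule: infinite_finite_induct) (auto simp: smult_add_left)

lemma kernel_invertible:
  fixes X :: "real^'n^'n"
  assumes "\<And>x. X *v x = 0 \<Longrightarrow> x = 0"
  shows "invertible X"
proof -
  have "inj ((*v) X)"
  proof (rule injI)
    fix x y assume "X *v x = X *v y"
    then have "X *v (x - y) = 0" by (simp add: matrix_vector_mult_diff_distrib)
    then have "x - y = 0" by (rule assms)
    then show "x = y" by simp
  qed
  then have "rank X = CARD('n)" using full_rank_injective by blast
  then have "det X \<noteq> 0" using det_eq_0_rank[of X] by simp
  then show ?thesis using invertible_det_nz by blast
qed

lemma noninv_kernel:
  fixes X :: "real^'n^'n"
  assumes "\<not> invertible X"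
  obtains x where "x \<noteq> 0" "X *v x = 0"
  using kernel_invertible assms by blast

lemma const_poly_sum: "(\<Sum>x\<in>A. [:f x:]) = [:\<Sum>x\<in>A. f x:]"
  by (induction A rule: infinite_finite_induct) auto

theorem lemmaE1:
  fixes k :: nat
    and c :: "real^'p"
    and Phi :: "nat \<Rightarrow> real^'p^'p"
    and alpha beta :: "real^'r^'p"
    and alpha_perp beta_perp :: "real^'q^'p"
  assumes card: "CARD('p) = CARD('q) + CARD('r)"
    and k: "k \<ge> 1"
    and Phi0_inv: "invertible (Phi 0)"
    and c_span: "c \<in> span (columns (Phi_one k Phi))"
    and rank_Phi1: "rank (Phi_one k Phi) = CARD('r)"
    and roots_unity: "order 1 (det_Phi k Phi) = CARD('q)"
    and roots_outside: "\<forall>z::complex. poly (map_poly of_real (det_Phi k Phi)) z = 0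
                          \<longrightarrow> z = 1 \<or> cmod z > 1"
    and alpha_rank: "rank alpha = CARD('r)"
    and beta_rank: "rank beta = CARD('r)"
    and alpha_beta: "alpha ** transpose beta = - Phi_one k Phi"
    and alpha_perp_rank: "rank alpha_perp = CARD('q)"
    and alpha_perp_orth: "transpose alpha_perp ** alpha = 0"
    and beta_perp_rank: "rank beta_perp = CARD('q)"
    and beta_perp_orth: "transpose beta_perp ** beta = 0"
  shows "let H = Hmat k Phi;
             chi = (\<lambda>z::real^'p. ((transpose alpha_perp ** H) *v z, transpose beta *v z));
             M = matrix_inv (transpose alpha_perp ** H ** beta_perp)
         in bij chi \<and> invertible (transpose alpha_perp ** H ** beta_perp) \<and>
            (\<forall>y1 y2. inv chi (y1, y2) =
                beta_perp *v (M *v y1)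
              + (mat 1 - beta_perp ** M ** transpose alpha_perp ** H)
                  *v (beta *v (matrix_inv (transpose beta ** beta) *v y2)))"
proof -
  define H where "H = Hmat k Phi"
  define P where "P = transpose alpha_perp ** H"
  define A where "A = P ** beta_perp"
  define C0 where "C0 = Phi_one k Phi"
  define C1 where "C1 = C0 - H"
  have btb: "transpose beta ** beta_perp = 0"
    using arg_cong[OF beta_perp_orth, of transpose] by (simp add: matrix_transpose_mul transpose_zero')
  have beta_inj: "x = 0" if "beta *v x = 0" for x
    using full_rank_injective[of beta] beta_rank that by (metis injD matrix_vector_mult_0_right)
  have beta_perp_inj: "x = 0" if "beta_perp *v x = 0" for x
    using full_rank_injective[of beta_perp] beta_perp_rank that by (metis injD matrix_vector_mult_0_right)
  have BtB_inv: "invertible (transpose beta ** beta)"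
    by (rule kernel_invertible) (use gram_zero beta_inj in blast)
  have ker_alpha: "\<exists>a. z = alpha *v a" if "transpose alpha_perp *v z = 0" for z
  proof -
    obtain a b where z: "z = alpha *v a + alpha_perp *v b"
      using orth_decomp[of alpha_perp alpha z] alpha_perp_orth alpha_rank alpha_perp_rank card by auto
    have "transpose alpha_perp *v z = (transpose alpha_perp ** alpha) *v a + (transpose alpha_perp ** alpha_perp) *v b"
      by (simp add: z matrix_vector_right_distrib matrix_vector_mul_assoc)
    then have "(transpose alpha_perp ** alpha_perp) *v b = 0" using that alpha_perp_orth by simp
    then have "alpha_perp *v b = 0" by (rule gram_zero)
    then show ?thesis using z by auto
  qed
  have ker_beta: "\<exists>a. z = beta_perp *v a" if "transpose beta *v z = 0" for z
  proof -
    obtain a b where z: "z = beta_perp *v a + beta *v b"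
      using orth_decomp[of beta beta_perp z] btb beta_rank beta_perp_rank card by auto
    have "transpose beta *v z = (transpose beta ** beta_perp) *v a + (transpose beta ** beta) *v b"
      by (simp add: z matrix_vector_right_distrib matrix_vector_mul_assoc)
    then have "(transpose beta ** beta) *v b = 0" using that btb by simp
    then have "beta *v b = 0" by (rule gram_zero)
    then show ?thesis using z by auto
  qed
  have C0eq: "C0 = - (alpha ** transpose beta)" using alpha_beta by (simp add: C0_def)
  have C0a: "transpose alpha_perp ** C0 = 0"
    by (simp add: C0eq matrix_mul_assoc alpha_perp_orth mneg_r)
  have C0b: "C0 ** beta_perp = 0"
    by (simp add: C0eq matrix_mul_assoc[symmetric] btb mneg_l)
  have Ainv: "invertible A"
  proof (rule ccontr)
    assume "\<not> invertible A"
    then obtain v where v: "v \<noteq> 0" "A *v v = 0" by (rule noninv_kernel)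
    define z where "z = C1 *v (beta_perp *v v)"
    have "transpose alpha_perp ** C1 = - P"
      by (simp add: C1_def mdiff_l C0a P_def)
    then have "transpose alpha_perp *v z = - (A *v v)"
      by (simp add: z_def matrix_vector_mul_assoc A_def mneg_l mvneg matrix_mul_assoc)
    then obtain a0 where a0: "z = alpha *v a0" using v ker_alpha by auto
    define u2 where "u2 = matrix_inv (transpose beta ** beta) *v a0"
    have C0u2: "(C0 ** beta) *v u2 = - z"
    proof -
      have "(C0 ** beta) *v u2 = - (alpha *v ((transpose beta ** beta ** matrix_inv (transpose beta ** beta)) *v a0))"
        by (simp add: C0eq u2_def mneg_l mvneg matrix_vector_mul_assoc matrix_mul_assoc)
      then show ?thesis using minv[OF BtB_inv] a0 by simp
    qed
    obtain h :: "'q + 'r \<Rightarrow> 'p" where h: "bij h"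
    proof -
      have "card (UNIV :: ('q + 'r) set) = card (UNIV :: 'p set)" using card by (simp add: card_sum)
      then obtain h :: "'q + 'r \<Rightarrow> 'p" where "bij_betw h UNIV UNIV"
        using finite_same_card_bij[of "UNIV :: ('q + 'r) set" "UNIV :: 'p set"] by auto
      then show ?thesis using that by blast
    qed
    define g where "g = inv h"
    have hg: "h (g j) = j" for j using h by (simp add: g_def bij_is_surj surj_f_inv_f)
    have gh: "g (h s) = s" for s using h by (simp add: g_def bij_is_inj inv_f_f)
    define u :: "real^'p" where "u = (\<chi> j. case g j of Inl i \<Rightarrow> v$i | Inr i \<Rightarrow> u2$i)"
    define N :: "real^'p^'p" where
      "N = (\<chi> a j. case g j of Inl i \<Rightarrow> (C1 ** beta_perp)$a$i | Inr i \<Rightarrow> (C0 ** beta)$a$i)"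
    have "u \<noteq> 0"
    proof -
      obtain i where "v$i \<noteq> 0" using v(1) by (auto simp: vec_eq_iff)
      then have "u $ h (Inl i) \<noteq> 0" by (simp add: u_def gh)
      then show ?thesis by auto
    qed
    have "N *v u = 0"
    proof -
      have "(N *v u) $ a = 0" for a
      proof -
        have "(N *v u) $ a = (\<Sum>j\<in>UNIV. N$a$j * u$j)" by (simp add: matrix_vector_mult_def)
        also have "\<dots> = (\<Sum>i\<in>UNIV. (C1 ** beta_perp)$a$i * v$i) + (\<Sum>i\<in>UNIV. (C0 ** beta)$a$i * u2$i)"
          by (subst sum_bij_Plus[OF h]) (simp add: N_def u_def gh)
        also have "\<dots> = ((C1 ** beta_perp) *v v)$a + ((C0 ** beta) *v u2)$a"
          by (simp add: matrix_vector_mult_def)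
        also have "\<dots> = 0" using C0u2 by (simp add: z_def matrix_vector_mul_assoc)
        finally show ?thesis .
      qed
      then show ?thesis by (simp add: vec_eq_iff)
    qed
    then have detN: "det N = 0"
      using \<open>u \<noteq> 0\<close> kernel_invertible[of N] invertible_det_nz[of N]
      by (metis matrix_vector_mul_assoc matrix_vector_mul_lid matrix_vector_mult_0_right minv)
    define E :: "real poly" where "E = [:-1,1:]"
    obtain R where R: "\<And>a b. Phi_poly k Phi $ a $ b = [:C0$a$b:] + E * [:C1$a$b:] + E^2 * R a b"
      using Phi_decomp[of k Phi] by (auto simp: C0_def C1_def H_def E_def)
    define Q :: "real^'p^'p" where
      "Q = (\<chi> a j. case g j of Inl i \<Rightarrow> beta_perp$a$i | Inr i \<Rightarrow> beta$a$i)"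
    define cQ :: "real poly^'p^'p" where "cQ = (\<chi> a j. [:Q$a$j:])"
    define M where "M = Phi_poly k Phi ** cQ"
    define M' :: "real poly^'p^'p" where
      "M' = (\<chi> a j. case g j of Inl i \<Rightarrow> [:(C1 ** beta_perp)$a$i:] + E * (\<Sum>b\<in>UNIV. R a b * [:beta_perp$b$i:])
                   | Inr i \<Rightarrow> M$a$j)"
    define d :: "'p \<Rightarrow> real poly" where "d j = (case g j of Inl i \<Rightarrow> E | Inr i \<Rightarrow> 1)" for j
    have Mfac: "M $ a $ j = d j * M' $ a $ j" for a j
    proof (cases "g j")
      case (Inl i)
      have "M $ a $ j = (\<Sum>b\<in>UNIV. Phi_poly k Phi $ a $ b * [:beta_perp$b$i:])"
        by (simp add: M_def cQ_def Q_def Inl matrix_matrix_mult_def)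
      also have "\<dots> = (\<Sum>b\<in>UNIV. [:C0$a$b * beta_perp$b$i:] + E * [:C1$a$b * beta_perp$b$i:]
                          + E^2 * (R a b * [:beta_perp$b$i:]))"
        by (intro sum.cong refl) (simp add: R algebra_simps)
      also have "\<dots> = [:(C0 ** beta_perp)$a$i:] + E * [:(C1 ** beta_perp)$a$i:]
                      + E^2 * (\<Sum>b\<in>UNIV. R a b * [:beta_perp$b$i:])"
        by (simp add: sum.distrib sum_distrib_left const_poly_sum matrix_matrix_mult_def smult_sum_left')
      also have "\<dots> = d j * M' $ a $ j"
        by (simp add: C0b d_def M'_def Inl algebra_simps power2_eq_square)
      finally show ?thesis .
    next
      case (Inr i)
      then show ?thesis by (simp add: d_def M'_def)
    qed
    have "det M = det (transpose M)" by simp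
    also have "transpose M = (\<chi> j. d j *s (\<chi> a. M' $ a $ j))"
      by (simp add: transpose_def vec_eq_iff Mfac)
    also have "det \<dots> = prod d UNIV * det (\<chi> j. (\<chi> a. M' $ a $ j))"
      by (rule det_rows_mul)
    also have "(\<chi> j. (\<chi> a. M' $ a $ j)) = transpose M'" by (simp add: transpose_def)
    also have "prod d UNIV = E ^ CARD('q)"
      by (subst prod_bij_Plus[OF h]) (simp add: d_def gh)
    finally have detM: "det M = E ^ CARD('q) * det M'" by simp
    have "(\<chi> a j. poly (M' $ a $ j) 1) = N"
    proof -
      have "poly (M' $ a $ j) 1 = N $ a $ j" for a j
      proof (cases "g j")
        case (Inl i)
        then show ?thesis by (simp add: M'_def N_def E_def)
      next
        case (Inr i)
        have "poly (M $ a $ j) 1 = (\<Sum>b\<in>UNIV. C0 $ a $ b * beta $ b $ i)"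
          by (simp add: M_def cQ_def Q_def Inr matrix_matrix_mult_def poly_sum Phi_poly_at1 C0_def mult.commute)
        then show ?thesis by (simp add: M'_def N_def Inr matrix_matrix_mult_def)
      qed
      then show ?thesis by (simp add: vec_eq_iff)
    qed
    then have "poly (det M') 1 = 0" using detN by (simp add: poly_det)
    then have "E dvd det M'" by (simp add: poly_eq_0_iff_dvd E_def)
    then have dvdM: "E ^ Suc CARD('q) dvd det M" by (simp add: detM)
    have detcQ: "det cQ = [:det Q:]"
    proof -
      have "poly (det cQ) x = poly [:det Q:] x" for x
        by (simp add: poly_det cQ_def)
      then show ?thesis using poly_eq_poly_eq_iff by blast
    qed
    have "det Q \<noteq> 0"
    proof -
      have "invertible Q"
      proof (rule kernel_invertible)
        fix w assume w: "Q *v w = 0"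
        define w1 where "w1 = (\<chi> i. w $ h (Inl i))"
        define w2 where "w2 = (\<chi> i. w $ h (Inr i))"
        have Qw: "Q *v w = beta_perp *v w1 + beta *v w2"
        proof -
          have "(Q *v w) $ a = (beta_perp *v w1 + beta *v w2) $ a" for a
            by (simp add: matrix_vector_mult_def sum_bij_Plus[OF h] Q_def gh w1_def w2_def)
          then show ?thesis by (simp add: vec_eq_iff)
        qed
        then have "transpose beta *v (beta_perp *v w1 + beta *v w2) = 0" using w by simp
        then have "(transpose beta ** beta) *v w2 = 0"
          by (simp add: matrix_vector_right_distrib matrix_vector_mul_assoc btb)
        then have "w2 = 0" using gram_zero beta_inj by blast
        then have "beta_perp *v w1 = 0" using w Qw by simp
        then have "w1 = 0" by (rule beta_perp_inj)
        have "w $ j = 0" for j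
        proof (cases "g j")
          case (Inl i)
          then have "w $ j = w1 $ i" using hg[of j] by (simp add: w1_def)
          then show ?thesis using \<open>w1 = 0\<close> by simp
        next
          case (Inr i)
          then have "w $ j = w2 $ i" using hg[of j] by (simp add: w2_def)
          then show ?thesis using \<open>w2 = 0\<close> by simp
        qed
        then show "w = 0" by (simp add: vec_eq_iff)
      qed
      then show ?thesis by (simp add: invertible_det_nz)
    qed
    have "det M = smult (det Q) (det_Phi k Phi)"
      by (simp add: M_def det_mul detcQ det_Phi_def)
    then have "E ^ Suc CARD('q) dvd det_Phi k Phi"
      using dvdM \<open>det Q \<noteq> 0\<close> dvd_smult_cancel by metis
    moreover have "det_Phi k Phi \<noteq> 0"
    proof
      assume "det_Phi k Phi = 0"
      then have "poly (det_Phi k Phi) 0 = 0" by simp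
      moreover have "poly (det_Phi k Phi) 0 = det (Phi 0)"
        by (simp add: det_Phi_def poly_det Phi_poly_at0)
      ultimately show False using Phi0_inv invertible_det_nz by auto
    qed
    ultimately have "Suc CARD('q) \<le> order 1 (det_Phi k Phi)"
      using order_divides[of 1 "Suc CARD('q)" "det_Phi k Phi"] by (simp add: E_def)
    then show False using roots_unity by simp
  qed
  define Mi where "Mi = matrix_inv A"
  have AMi: "P ** beta_perp ** Mi = mat 1" and MiA: "Mi ** (P ** beta_perp) = mat 1"
    using minv[OF Ainv] by (simp_all add: Mi_def A_def)
  define B where "B = matrix_inv (transpose beta ** beta)"
  have BB: "transpose beta ** beta ** B = mat 1" using minv[OF BtB_inv] by (simp add: B_def)
  define chi where "chi = (\<lambda>z::real^'p. (P *v z, transpose beta *v z))"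
  define F where "F = (\<lambda>y1 y2. beta_perp *v (Mi *v y1)
              + (mat 1 - beta_perp ** Mi ** P) *v (beta *v (B *v y2)))"
  have chiF: "chi (F y1 y2) = (y1, y2)" for y1 y2
  proof -
    define w where "w = beta *v (B *v y2)"
    have "P ** (mat 1 - beta_perp ** Mi ** P) = P - P ** beta_perp ** Mi ** P"
      by (simp add: mdiff_l matrix_mul_assoc)
    also have "\<dots> = 0" using AMi by simp
    finally have e1: "P ** (mat 1 - beta_perp ** Mi ** P) = 0" .
    have "P *v F y1 y2 = (P ** beta_perp ** Mi) *v y1 + (P ** (mat 1 - beta_perp ** Mi ** P)) *v w"
      by (simp add: F_def w_def matrix_vector_right_distrib matrix_vector_mul_assoc matrix_mul_assoc)
    also have "\<dots> = y1" using AMi e1 by simp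
    finally have 1: "P *v F y1 y2 = y1" .
    have "transpose beta ** (mat 1 - beta_perp ** Mi ** P) = transpose beta"
      by (simp add: mdiff_l matrix_mul_assoc btb)
    then have "transpose beta *v F y1 y2 = (transpose beta ** beta ** B) *v y2"
      by (simp add: F_def w_def matrix_vector_right_distrib matrix_vector_mul_assoc matrix_mul_assoc btb)
    also have "\<dots> = y2" using BB by simp
    finally show ?thesis using 1 by (simp add: chi_def)
  qed
  have inj: "inj chi"
  proof (rule injI)
    fix x y assume "chi x = chi y"
    then have e: "P *v (x - y) = 0" "transpose beta *v (x - y) = 0"
      by (simp_all add: chi_def matrix_vector_mult_diff_distrib)
    obtain a where a: "x - y = beta_perp *v a" using ker_beta[OF e(2)] by blast
    have "(P ** beta_perp) *v a = 0" using e(1) a by (simp add: matrix_vector_mul_assoc)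
    then have "(Mi ** (P ** beta_perp)) *v a = 0" by (simp add: matrix_vector_mul_assoc[symmetric])
    then have "a = 0" using MiA by simp
    then show "x = y" using a by simp
  qed
  have surj: "surj chi"
  proof (rule surjI)
    fix y show "chi (F (fst y) (snd y)) = y" using chiF by simp
  qed
  have invF: "inv chi (y1, y2) = F y1 y2" for y1 y2
    using inv_f_eq[OF inj chiF] by simp
  have F': "F y1 y2 = beta_perp *v (Mi *v y1)
              + (mat 1 - beta_perp ** Mi ** transpose alpha_perp ** H) *v (beta *v (B *v y2))" for y1 y2
    by (simp add: F_def P_def matrix_mul_assoc)
  have "bij chi" using inj surj by (simp add: bij_def)
  then show ?thesis
    unfolding Let_def H_def[symmetric] P_def[symmetric] A_def[symmetric] Mi_def[symmetric]
      B_def[symmetric] chi_def[symmetric]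
    using Ainv invF F' by simp
qed

end
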